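(* Assume $n>3t+2d$. In any execution of Algorithm 1, if a correct process $p_i$ mbrb-broadcasts $(m,sn)$, then at least $$c-d-\left\lfloor\frac{d\,\lfloor\frac{n+t}{2}\rfloor}{c-d-\lfloor\frac{n+t}{2}\rfloor}\right\rfloor$$ correct processes mbrb-deliver $(m,sn,i)$ at most two communication steps after the mbrb-broadcast.
   Context: System model. There are $n$ asynchronous processes $p_1,\dots,p_n$ with distinct known identities. Up to $t$ are Byzantine (arbitrary behavior); the rest are correct; $c$ is the number of correct processes in the execution, $n-t\le c\le n$. The network is fully connected, asynchronous, never corrupts/duplicates/creates messages; "broadcast $M$" sends $M$ to all $n$ processes; a message adversary may suppress, per broadcast by a correct process, up to $d$ ($0\le d<c$) copies addressed to correct processes, all other copies among correct processes being received. Signatures are unforgeable and public keys are known. Time is measured in communication steps: local computation takes zero time and every imp-message has the same transfer delay of one step. Algorithm 1 (code for $p_i$). Each process stores, for each triplet $(m,sn,j)$, a set of saved valid signatures of that triplet, at most one per signer. On $\mathrm{mbrb\_broadcast}(m,sn)$: $p_i$ saves its own signature of $(m,sn,i)$ and broadcasts $\mathrm{BUNDLE}(m,sn,i,S)$, $S$ the saved signatures for $(m,sn,i)$. On receiving $\mathrm{BUNDLE}(m,sn,j,sigs)$: if $p_i$ has not already mbrb-delivered some $(-,sn,j)$ and $sigs$ contains a valid signature of $(m,sn,j)$ by $p_j$, then: (1) save all new valid signatures of $(m,sn,j)$ in $sigs$; (2) if $p_i$ has not yet signed any $(-,sn,j)$, save its own signature of $(m,sn,j)$ and broadcast $\mathrm{BUNDLE}(m,sn,j,\text{all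 saved signatures for }(m,sn,j))$; (3) if strictly more than $\frac{n+t}{2}$ signatures for $(m,sn,j)$ are saved, broadcast $\mathrm{BUNDLE}(m,sn,j,\text{all saved signatures})$ and mbrb-deliver $(m,sn,j)$. A correct process never uses the same sequence number twice. *)

theory Defs
  imports Complex_Main
begin

text \<open>Model of Algorithm 1. Processes are 0..n-1 (p_1..p_n shifted). A signature of a
triplet x = (m, sn, j) is represented abstractly by its signer; a BUNDLE(m,sn,j,sigs) is the
tuple (m, sn, j, S) with S the set of signers whose signatures of (m,sn,j) are in sigs
(only signers in 0..n-1 have known public keys, hence valid signatures).\<close>

type_synonym 'm triple = "'m \<times> nat \<times> nat"
type_synonym 'm bndl = "'m \<times> nat \<times> nat \<times> nat set"

record 'm pst =
  saved :: "'m triple \<Rightarrow> nat set"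
  signed_keys :: "(nat \<times> nat) set"
  dlv :: "'m triple set"

record 'm pout =
  bcs :: "'m bndl list"
  sgs :: "'m triple list"
  dls :: "'m triple list"

datatype 'm action = MBcast 'm nat | Recv "'m bndl" | Idle

definition init_st :: "'m pst" where
  "init_st = \<lparr>saved = (\<lambda>_. {}), signed_keys = {}, dlv = {}\<rparr>"

definition no_out :: "'m pout" where
  "no_out = \<lparr>bcs = [], sgs = [], dls = []\<rparr>"

definition bcast_step :: "nat \<Rightarrow> 'm \<Rightarrow> nat \<Rightarrow> 'm pst \<Rightarrow> 'm pst \<times> 'm pout" where
  "bcast_step i m sn s =
    (let x = (m, sn, i);
         s' = s\<lparr>saved := (saved s)(x := saved s x \<union> {i}),
                signed_keys := insert (sn, i) (signed_keys s)\<rparr>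
     in (s', \<lparr>bcs = [(m, sn, i, saved s' x)], sgs = [x], dls = []\<rparr>))"

definition recv_step :: "nat \<Rightarrow> nat \<Rightarrow> nat \<Rightarrow> 'm bndl \<Rightarrow> 'm pst \<Rightarrow> 'm pst \<times> 'm pout" where
  "recv_step n t i b s = (case b of (m, sn, j, S) \<Rightarrow>
     if (\<exists>m'. (m', sn, j) \<in> dlv s) \<or> j \<notin> S \<or> n \<le> j then (s, no_out)
     else (let x = (m, sn, j);
               s1 = s\<lparr>saved := (saved s)(x := saved s x \<union> (S \<inter> {..<n}))\<rparr>;
               (s2, b2, g2) =
                 (if (sn, j) \<in> signed_keys s1 then (s1, [], [])
                  else (let s' = s1\<lparr>saved := (saved s1)(x := saved s1 x \<union> {i}),
                                    signed_keys := insert (sn, j) (signed_keys s1)\<rparr>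
                        in (s', [(m, sn, j, saved s' x)], [x])))
           in if n + t < 2 * card (saved s2 x)
              then (s2\<lparr>dlv := insert x (dlv s2)\<rparr>,
                    \<lparr>bcs = b2 @ [(m, sn, j, saved s2 x)], sgs = g2, dls = [x]\<rparr>)
              else (s2, \<lparr>bcs = b2, sgs = g2, dls = []\<rparr>)))"

definition act_step :: "nat \<Rightarrow> nat \<Rightarrow> nat \<Rightarrow> 'm action \<Rightarrow> 'm pst \<Rightarrow> 'm pst \<times> 'm pout" where
  "act_step n t i a s = (case a of
      MBcast m sn \<Rightarrow> bcast_step i m sn s
    | Recv b \<Rightarrow> recv_step n t i b s
    | Idle \<Rightarrow> (s, no_out))"

text \<open>An execution is an infinite sequence of events E k = (correct process, action),
with time stamps tm k (in communication steps). states n t E k = local states before event k.\<close>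
fun states :: "nat \<Rightarrow> nat \<Rightarrow> (nat \<Rightarrow> nat \<times> 'm action) \<Rightarrow> nat \<Rightarrow> nat \<Rightarrow> 'm pst" where
  "states n t E 0 = (\<lambda>_. init_st)"
| "states n t E (Suc k) =
     (case E k of (p, a) \<Rightarrow> (states n t E k)(p := fst (act_step n t p a (states n t E k p))))"

definition outp :: "nat \<Rightarrow> nat \<Rightarrow> (nat \<Rightarrow> nat \<times> 'm action) \<Rightarrow> nat \<Rightarrow> 'm pout" where
  "outp n t E k = (case E k of (p, a) \<Rightarrow> snd (act_step n t p a (states n t E k p)))"

text \<open>Admissible executions: only correct processes (set C) take steps; time is monotone and
unbounded; sequence numbers are not reused; every received message either was broadcast by a
correct process exactly one step before, or comes from a Byzantine process (which exists) and
contains signatures of correct processes only if these were produced at least two steps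
earlier (one step to reach the Byzantine process, one step to come back); of every broadcast
by a correct process, at most d copies to correct processes are not received one step later.\<close>
definition valid_exec :: "nat \<Rightarrow> nat \<Rightarrow> nat \<Rightarrow> nat set \<Rightarrow> (nat \<Rightarrow> nat \<times> 'm action) \<Rightarrow> (nat \<Rightarrow> nat) \<Rightarrow> bool" where
  "valid_exec n t d C E tm \<longleftrightarrow>
    (\<forall>k. fst (E k) \<in> C) \<and> mono tm \<and> (\<forall>T. \<exists>k. T < tm k) \<and>
    (\<forall>k k' p m m' sn. E k = (p, MBcast m sn) \<and> E k' = (p, MBcast m' sn) \<longrightarrow> k = k') \<and>
    (\<forall>k p b. E k = (p, Recv b) \<longrightarrow>
        (\<exists>k'. tm k' + 1 = tm k \<and> b \<in> set (bcs (outp n t E k'))) \<or>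
        ({..<n} - C \<noteq> {} \<and>
         (case b of (m, sn, j, S) \<Rightarrow>
            \<forall>q \<in> S \<inter> C. \<exists>k'. tm k' + 2 \<le> tm k \<and> fst (E k') = q \<and>
                              (m, sn, j) \<in> set (sgs (outp n t E k'))))) \<and>
    (\<forall>k b. b \<in> set (bcs (outp n t E k)) \<longrightarrow>
        card {p \<in> C. \<not> (\<exists>k'. E k' = (p, Recv b) \<and> tm k' = tm k + 1)} \<le> d)"

end

theory Submission
  imports Defs
begin

lemma recv_noguard:
  assumes "(\<exists>m'. (m', sn, j) \<in> dlv s) \<or> j \<notin> S \<or> n \<le> j"
  shows "recv_step n t p (m3, sn, j, S) s = (s, no_out)"
  using assms unfolding recv_step_def by auto

lemma recv_guard:
  assumes "\<not>((\<exists>m'. (m', sn, j) \<in> dlv s) \<or> j \<notin> S \<or> n \<le> j)"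
    and "recv_step n t p (m3, sn, j, S) s = (s', out)"
  shows "(\<forall>b\<in>set (bcs out). \<exists>S'. b = (m3,sn,j,S') \<and> S \<inter> {..<n} \<subseteq> S')
     \<and> (\<forall>y\<in>set (sgs out). y = (m3,sn,j))
     \<and> (\<forall>y\<in>set (dls out). y = (m3,sn,j))
     \<and> ((sn,j) \<notin> signed_keys s \<longrightarrow> (\<exists>S'. (m3,sn,j,S') \<in> set (bcs out) \<and> p \<in> S'))
     \<and> S \<inter> {..<n} \<subseteq> saved s' (m3,sn,j)
     \<and> (dls out = [] \<longrightarrow> 2 * card (saved s' (m3,sn,j)) \<le> n + t)
     \<and> (\<forall>y. saved s y \<subseteq> saved s' y \<and> saved s' y \<subseteq> saved s y \<union> {..<n} \<union> {p})
     \<and> signed_keys s' \<subseteq> insert (sn,j) (signed_keys s)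
     \<and> dlv s' \<subseteq> dlv s \<union> set (dls out)"
  using assms unfolding recv_step_def Let_def no_out_def
  by (auto split: if_splits)

lemma recv_cases:
  obtains "recv_step n t p (m3, sn, j, S) s = (s, no_out)"
  | "\<not>((\<exists>m'. (m', sn, j) \<in> dlv s) \<or> j \<notin> S \<or> n \<le> j)"
proof (cases "(\<exists>m'. (m', sn, j) \<in> dlv s) \<or> j \<notin> S \<or> n \<le> j")
  case True show ?thesis by (rule that(1)[OF recv_noguard[OF True]])
next
  case False then show ?thesis using that(2) by blast
qed

lemma act_props:
  assumes "act_step n t p a s = (s', out)"
  shows "(\<forall>y. saved s y \<subseteq> saved s' y \<and> saved s' y \<subseteq> saved s y \<union> {..<n} \<union> {p})
    \<and> (\<forall>z \<in> signed_keys s'. z \<in> signed_keys s \<or> (\<exists>m' sn'. a = MBcast m' sn' \<and> z = (sn',p))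
          \<or> (\<exists>m' sn' j S. a = Recv (m',sn',j,S) \<and> j\<in>S \<and> z = (sn',j)))
    \<and> dlv s' \<subseteq> dlv s \<union> set (dls out)
    \<and> (\<forall>m3 sn3 j S'. (m3,sn3,j,S') \<in> set (bcs out) \<longrightarrow> j \<in> S' \<and>
          ((a = MBcast m3 sn3 \<and> p = j) \<or> (\<exists>S. a = Recv (m3,sn3,j,S) \<and> j \<in> S)))
    \<and> (\<forall>m3 sn3 j. (m3,sn3,j) \<in> set (sgs out) \<longrightarrow>
          ((a = MBcast m3 sn3 \<and> p = j) \<or> (\<exists>S. a = Recv (m3,sn3,j,S) \<and> j \<in> S)))
    \<and> (\<forall>m3 sn3 j. (m3,sn3,j) \<in> set (dls out) \<longrightarrow> (\<exists>S. a = Recv (m3,sn3,j,S) \<and> j \<in> S))"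
proof (cases a)
  case (MBcast x1 x2)
  then show ?thesis using assms unfolding act_step_def bcast_step_def Let_def by (auto split: if_splits)
next
  case (Recv b)
  obtain m3 sn3 j S where b: "b = (m3,sn3,j,S)" by (cases b) auto
  have r: "recv_step n t p (m3,sn3,j,S) s = (s', out)" using assms Recv b by (simp add: act_step_def)
  show ?thesis
  proof (cases rule: recv_cases[of n t p m3 sn3 j S s])
    case 1 then show ?thesis using r Recv b by (auto simp: no_out_def)
  next
    case 2
    note g = recv_guard[OF 2 r]
    have jS: "j \<in> S" "j < n" using 2 by auto
    have bc: "\<forall>m3' sn3' j' S'. (m3',sn3',j',S') \<in> set (bcs out) \<longrightarrow> m3'=m3 \<and> sn3'=sn3 \<and> j'=j \<and> j \<in> S'"
      using g jS by fastforce
    show ?thesis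
      apply (intro conjI)
      using g apply blast
      using g jS apply (auto simp: Recv b)[1]
      using g apply blast
      using bc jS apply (auto simp: Recv b)[1]
      using g jS apply (auto simp: Recv b)[1]
      using g jS apply (auto simp: Recv b)[1]
      done
  qed
next
  case Idle
  then show ?thesis using assms unfolding act_step_def by (auto simp: no_out_def)
qed

lemma states_Suc: "states n t E (Suc k) q = (if q = fst (E k) then fst (act_step n t q (snd (E k)) (states n t E k q)) else states n t E k q)"
  by (cases "E k") auto

lemma outp_eq: "outp n t E k = snd (act_step n t (fst (E k)) (snd (E k)) (states n t E k (fst (E k))))"
  by (cases "E k") (auto simp: outp_def)

lemma step_eq: "act_step n t (fst (E k)) (snd (E k)) (states n t E k (fst (E k))) = (states n t E (Suc k) (fst (E k)), outp n t E k)"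
  by (simp add: states_Suc outp_eq del: states.simps)

lemmas ev_props = act_props[OF step_eq]

locale mbrb =
  fixes n t d :: nat and C :: "nat set" and E :: "nat \<Rightarrow> nat \<times> 'm action" and tm :: "nat \<Rightarrow> nat"
  assumes Cn: "C \<subseteq> {..<n}" and ve: "valid_exec n t d C E tm"
begin

abbreviation "st \<equiv> states n t E"
abbreviation "out \<equiv> outp n t E"

lemma EC: "fst (E k) \<in> C" using ve unfolding valid_exec_def by blast
lemma mono_tm: "mono tm" using ve unfolding valid_exec_def by blast
lemma uniq: "E k = (p, MBcast m1 sn) \<Longrightarrow> E k' = (p, MBcast m2 sn) \<Longrightarrow> k = k'"
  using ve unfolding valid_exec_def by blast
lemma recv_src: "E k = (p, Recv b) \<Longrightarrow>
        (\<exists>k'. tm k' + 1 = tm k \<and> b \<in> set (bcs (out k'))) \<or>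
        ({..<n} - C \<noteq> {} \<and>
         (case b of (m, sn, j, S) \<Rightarrow>
            \<forall>q \<in> S \<inter> C. \<exists>k'. tm k' + 2 \<le> tm k \<and> fst (E k') = q \<and>
                              (m, sn, j) \<in> set (sgs (out k'))))"
  using ve unfolding valid_exec_def by blast
lemma miss: "b \<in> set (bcs (out k)) \<Longrightarrow>
        card {p \<in> C. \<not> (\<exists>k'. E k' = (p, Recv b) \<and> tm k' = tm k + 1)} \<le> d"
  using ve unfolding valid_exec_def by blast

lemma tm_le: "k \<le> k' \<Longrightarrow> tm k \<le> tm k'" using mono_tm by (simp add: mono_def)

lemma st_other: "q \<noteq> fst (E k) \<Longrightarrow> st (Suc k) q = st k q"
  by (simp add: states_Suc del: states.simps)

lemmas ap1 = act_props[OF step_eq, THEN conjunct1]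
lemmas ap2 = act_props[OF step_eq, THEN conjunct2, THEN conjunct1]
lemmas ap3 = act_props[OF step_eq, THEN conjunct2, THEN conjunct2, THEN conjunct1]
lemmas ap4 = act_props[OF step_eq, THEN conjunct2, THEN conjunct2, THEN conjunct2, THEN conjunct1]
lemmas ap5 = act_props[OF step_eq, THEN conjunct2, THEN conjunct2, THEN conjunct2, THEN conjunct2, THEN conjunct1]
lemmas ap6 = act_props[OF step_eq, THEN conjunct2, THEN conjunct2, THEN conjunct2, THEN conjunct2, THEN conjunct2]

lemma ev_saved: "saved (st k (fst (E k))) y \<subseteq> saved (st (Suc k) (fst (E k))) y"
  "saved (st (Suc k) (fst (E k))) y \<subseteq> saved (st k (fst (E k))) y \<union> {..<n} \<union> {fst (E k)}"
  using ap1[of n t E k] by blast+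
lemma ev_signed: "z \<in> signed_keys (st (Suc k) (fst (E k))) \<Longrightarrow> z \<in> signed_keys (st k (fst (E k))) \<or> (\<exists>m' sn'. snd (E k) = MBcast m' sn' \<and> z = (sn',fst (E k)))
          \<or> (\<exists>m' sn' j S. snd (E k) = Recv (m',sn',j,S) \<and> j\<in>S \<and> z = (sn',j))"
  using ap2[of n t E k] by blast
lemma ev_dlv: "dlv (st (Suc k) (fst (E k))) \<subseteq> dlv (st k (fst (E k))) \<union> set (dls (out k))"
  using ap3[of n t E k] by blast
lemma ev_bcs: "(m3,sn3,j,S') \<in> set (bcs (out k)) \<Longrightarrow> j \<in> S' \<and>
          ((snd (E k) = MBcast m3 sn3 \<and> fst (E k) = j) \<or> (\<exists>S. snd (E k) = Recv (m3,sn3,j,S) \<and> j \<in> S))"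
  using ap4[of n t E k] by blast
lemma ev_sgs: "(m3,sn3,j) \<in> set (sgs (out k)) \<Longrightarrow>
          ((snd (E k) = MBcast m3 sn3 \<and> fst (E k) = j) \<or> (\<exists>S. snd (E k) = Recv (m3,sn3,j,S) \<and> j \<in> S))"
  using ap5[of n t E k] by blast
lemma ev_dls: "(m3,sn3,j) \<in> set (dls (out k)) \<Longrightarrow> (\<exists>S. snd (E k) = Recv (m3,sn3,j,S) \<and> j \<in> S)"
  using ap6[of n t E k] by blast

lemma saved_bound: "saved (st k q) y \<subseteq> {..<n}"
proof (induction k)
  case 0 then show ?case by (simp add: init_st_def)
next
  case (Suc k)
  have "fst (E k) < n" using EC Cn by blast
  then show ?case using Suc ev_saved(2)[of k y] st_other[of q k] by (cases "q = fst (E k)") auto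
qed

lemma saved_mono1: "saved (st k q) y \<subseteq> saved (st (Suc k) q) y"
  using ev_saved(1)[of k y] st_other[of q k] by (cases "q = fst (E k)") auto

lemma saved_mono: "k \<le> k' \<Longrightarrow> saved (st k q) y \<subseteq> saved (st k' q) y"
proof (induction k' rule: dec_induct)
  case base then show ?case by simp
next
  case (step k') then show ?case using saved_mono1[of k' q y] by blast
qed

lemma inv_signed: "(sn',j) \<in> signed_keys (st k q) \<Longrightarrow> \<exists>k'<k. fst (E k') = q \<and>
   ((\<exists>m'. snd (E k') = MBcast m' sn' \<and> j = q) \<or> (\<exists>m' S. snd (E k') = Recv (m',sn',j,S) \<and> j \<in> S))"
proof (induction k)
  case 0 then show ?case by (simp add: init_st_def)
next
  case (Suc k)
  show ?case
  proof (cases "q = fst (E k)")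
    case True
    then have "(sn',j) \<in> signed_keys (st k q) \<or> (\<exists>m'. snd (E k) = MBcast m' sn' \<and> j = q)
       \<or> (\<exists>m' S. snd (E k) = Recv (m',sn',j,S) \<and> j \<in> S)"
      using Suc.prems ev_signed[of "(sn',j)" k] by auto
    then show ?thesis using Suc.IH True less_Suc_eq by blast
  next
    case False
    then show ?thesis using Suc st_other[of q k] less_Suc_eq by auto
  qed
qed

lemma inv_dlv: "y \<in> dlv (st k q) \<Longrightarrow> \<exists>k'<k. fst (E k') = q \<and> y \<in> set (dls (out k'))"
proof (induction k)
  case 0 then show ?case by (simp add: init_st_def)
next
  case (Suc k)
  show ?case
  proof (cases "q = fst (E k)")
    case True
    then have "y \<in> dlv (st k q) \<or> y \<in> set (dls (out k))"
      using Suc.prems ev_dlv[of k] by auto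
    then show ?thesis using Suc.IH True less_Suc_eq by blast
  next
    case False
    then show ?thesis using Suc st_other[of q k] less_Suc_eq by auto
  qed
qed

end

locale mb2 = mbrb n t d C E tm for n t d C and E :: "nat \<Rightarrow> nat \<times> 'm action" and tm +
  fixes k0 i sn and m :: 'm
  assumes Ek0: "E k0 = (i, MBcast m sn)"
begin

lemma iC: "i \<in> C" using EC[of k0] Ek0 by simp
lemma iN: "i < n" using iC Cn by blast

lemma mb_k0: "E k' = (i, MBcast m'' sn) \<Longrightarrow> k' = k0 \<and> m'' = m"
  using uniq[of k' i m'' sn k0 m] Ek0 by simp

lemma Q_aux: "\<forall>k q m'' S. tm k = T \<longrightarrow> E k = (q, Recv (m'',sn,i,S)) \<longrightarrow> i \<in> S \<longrightarrow> m'' = m \<and> Suc (tm k0) \<le> tm k"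
proof (induction T rule: less_induct)
  case (less T)
  show ?case
  proof (intro allI impI)
    fix k q m'' S assume T: "tm k = T" and Ek: "E k = (q, Recv (m'',sn,i,S))" and iS: "i \<in> S"
    have IH: "\<And>k' q' m3 S'. tm k' < T \<Longrightarrow> E k' = (q', Recv (m3,sn,i,S')) \<Longrightarrow> i \<in> S' \<Longrightarrow> m3 = m \<and> Suc (tm k0) \<le> tm k'"
      using less by blast
    have src: "(\<exists>k'. tm k' + 1 = tm k \<and> (m'',sn,i,S) \<in> set (bcs (out k'))) \<or>
        (\<forall>q\<in>S \<inter> C. \<exists>k'. tm k' + 2 \<le> tm k \<and> fst (E k') = q \<and> (m'',sn,i) \<in> set (sgs (out k')))"
      using recv_src[OF Ek] by auto
    have key: "\<And>k'. tm k' < tm k \<Longrightarrow> (snd (E k') = MBcast m'' sn \<and> fst (E k') = i) \<or> (\<exists>S'. snd (E k') = Recv (m'',sn,i,S') \<and> i \<in> S')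
         \<Longrightarrow> m'' = m \<and> tm k0 \<le> tm k'"
    proof -
      fix k' assume lt: "tm k' < tm k" and h: "(snd (E k') = MBcast m'' sn \<and> fst (E k') = i) \<or> (\<exists>S'. snd (E k') = Recv (m'',sn,i,S') \<and> i \<in> S')"
      show "m'' = m \<and> tm k0 \<le> tm k'"
      proof (cases "snd (E k') = MBcast m'' sn \<and> fst (E k') = i")
        case True
        then have "E k' = (i, MBcast m'' sn)" by (cases "E k'") auto
        then show ?thesis using mb_k0 by blast
      next
        case False
        then obtain S' where "E k' = (fst (E k'), Recv (m'',sn,i,S'))" "i \<in> S'" using h by (cases "E k'") auto
        then show ?thesis using IH[of k'] lt T by fastforce
      qed
    qed
    show "m'' = m \<and> Suc (tm k0) \<le> tm k"
    proof (cases "\<exists>k'. tm k' + 1 = tm k \<and> (m'',sn,i,S) \<in> set (bcs (out k'))")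
      case True
      then obtain k' where k': "tm k' + 1 = tm k" "(m'',sn,i,S) \<in> set (bcs (out k'))" by blast
      have "(snd (E k') = MBcast m'' sn \<and> fst (E k') = i) \<or> (\<exists>S'. snd (E k') = Recv (m'',sn,i,S') \<and> i \<in> S')"
        using ev_bcs[OF k'(2)] by blast
      then show ?thesis using key[of k'] k'(1) by auto
    next
      case False
      then obtain k' where k': "tm k' + 2 \<le> tm k" "fst (E k') = i" "(m'',sn,i) \<in> set (sgs (out k'))"
        using src iS iC by blast
      have "(snd (E k') = MBcast m'' sn \<and> fst (E k') = i) \<or> (\<exists>S'. snd (E k') = Recv (m'',sn,i,S') \<and> i \<in> S')"
        using ev_sgs[OF k'(3)] by blast
      then show ?thesis using key[of k'] k'(1) by auto
    qed
  qed
qed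

lemma Q: "E k = (q, Recv (m'',sn,i,S)) \<Longrightarrow> i \<in> S \<Longrightarrow> m'' = m \<and> Suc (tm k0) \<le> tm k"
  using Q_aux by blast

definition "S0 = insert i (saved (st k0 i) (m,sn,i))"
definition "b0 = (m,sn,i,S0)"

lemma iS0: "i \<in> S0" by (simp add: S0_def)

lemma bcs_k0: "bcs (out k0) = [b0]"
  using Ek0 by (simp add: outp_def act_step_def bcast_step_def Let_def b0_def S0_def)

lemma step_at: "E k = (p, a) \<Longrightarrow> act_step n t p a (st k p) = (st (Suc k) p, out k)"
  using step_eq[of n t E k] by simp

lemma R1: "E k = (q, Recv (m'',sn,i,S)) \<Longrightarrow> i \<in> S \<Longrightarrow> tm k = Suc (tm k0) \<Longrightarrow> (m'',sn,i,S) = b0"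
proof -
  assume Ek: "E k = (q, Recv (m'',sn,i,S))" and iS: "i \<in> S" and T: "tm k = Suc (tm k0)"
  have noR: "\<And>k'. tm k' < Suc (tm k0) \<Longrightarrow> \<not> (\<exists>S'. snd (E k') = Recv (m'',sn,i,S') \<and> i \<in> S')"
  proof
    fix k' assume lt: "tm k' < Suc (tm k0)" and "\<exists>S'. snd (E k') = Recv (m'',sn,i,S') \<and> i \<in> S'"
    then obtain S' where "E k' = (fst (E k'), Recv (m'',sn,i,S'))" "i \<in> S'" by (cases "E k'") auto
    from Q[OF this] lt show False by simp
  qed
  show ?thesis
  proof (cases "\<exists>k'. tm k' + 1 = tm k \<and> (m'',sn,i,S) \<in> set (bcs (out k'))")
    case True
    then obtain k' where k': "tm k' + 1 = tm k" "(m'',sn,i,S) \<in> set (bcs (out k'))" by blast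
    have "(snd (E k') = MBcast m'' sn \<and> fst (E k') = i)"
      using ev_bcs[OF k'(2)] noR[of k'] k'(1) T by auto
    then have "E k' = (i, MBcast m'' sn)" by (cases "E k'") auto
    then have "k' = k0" using mb_k0 by blast
    then show ?thesis using k'(2) bcs_k0 by simp
  next
    case False
    then obtain k' where k': "tm k' + 2 \<le> tm k" "fst (E k') = i" "(m'',sn,i) \<in> set (sgs (out k'))"
      using recv_src[OF Ek] iS iC by auto
    have "(snd (E k') = MBcast m'' sn \<and> fst (E k') = i)"
      using ev_sgs[OF k'(3)] noR[of k'] k'(1) T by auto
    then have "E k' = (i, MBcast m'' sn)" by (cases "E k'") auto
    then have "k' = k0" using mb_k0 by blast
    then show ?thesis using k'(1) T by simp
  qed
qed

lemma carrier:
  assumes wC: "w \<in> C" and wi: "w \<noteq> i" and ex: "\<exists>k'. E k' = (w, Recv b0) \<and> tm k' = Suc (tm k0)"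
  shows "\<exists>k1 S'. tm k1 = Suc (tm k0) \<and> (m,sn,i,S') \<in> set (bcs (out k1)) \<and> w \<in> S'"
proof -
  define P where "P k' \<longleftrightarrow> E k' = (w, Recv b0) \<and> tm k' = Suc (tm k0)" for k'
  define k1 where "k1 = (LEAST k'. P k')"
  have P1: "P k1" unfolding k1_def using ex LeastI_ex[of P] P_def by blast
  have noE: "\<And>k'. k' < k1 \<Longrightarrow> fst (E k') = w \<Longrightarrow> \<not> (\<exists>m' S. snd (E k') = Recv (m',sn,i,S) \<and> i \<in> S)"
  proof
    fix k' assume lt: "k' < k1" and f: "fst (E k') = w" and "\<exists>m' S. snd (E k') = Recv (m',sn,i,S) \<and> i \<in> S"
    then obtain m' S where Ek': "E k' = (w, Recv (m',sn,i,S))" "i \<in> S" by (cases "E k'") auto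
    have "Suc (tm k0) \<le> tm k'" using Q[OF Ek'] by simp
    moreover have "tm k' \<le> tm k1" using tm_le lt by simp
    ultimately have "tm k' = Suc (tm k0)" using P1 P_def by simp
    then have "(m',sn,i,S) = b0" using R1[OF Ek'] by simp
    then have "P k'" using Ek' \<open>tm k' = Suc (tm k0)\<close> P_def by simp
    then show False using not_less_Least[of k' P] lt k1_def by simp
  qed
  have nodlv: "\<not> (\<exists>m'. (m', sn, i) \<in> dlv (st k1 w))"
  proof
    assume "\<exists>m'. (m', sn, i) \<in> dlv (st k1 w)"
    then obtain m' where "(m', sn, i) \<in> dlv (st k1 w)" by blast
    from inv_dlv[OF this] obtain k' where "k' < k1" "fst (E k') = w" "(m',sn,i) \<in> set (dls (out k'))" by blast
    then show False using ev_dls noE by blast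
  qed
  have nosig: "(sn, i) \<notin> signed_keys (st k1 w)"
  proof
    assume "(sn, i) \<in> signed_keys (st k1 w)"
    from inv_signed[OF this] obtain k' where "k' < k1" "fst (E k') = w"
      "(\<exists>m'. snd (E k') = MBcast m' sn \<and> i = w) \<or> (\<exists>m' S. snd (E k') = Recv (m',sn,i,S) \<and> i \<in> S)" by blast
    then show False using noE wi by blast
  qed
  have r: "recv_step n t w (m,sn,i,S0) (st k1 w) = (st (Suc k1) w, out k1)"
    using step_at[of k1 w "Recv b0"] P1 P_def by (simp add: act_step_def b0_def)
  have g: "\<not>((\<exists>m'. (m', sn, i) \<in> dlv (st k1 w)) \<or> i \<notin> S0 \<or> n \<le> i)"
    using nodlv iS0 iN by auto
  from recv_guard[OF g r] nosig obtain S' where "(m,sn,i,S') \<in> set (bcs (out k1))" "w \<in> S'" by blast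
  then show ?thesis using P1 P_def by blast
qed

definition "D = {p\<in>C. \<exists>k. fst (E k) = p \<and> tm k \<le> tm k0 + 2 \<and> (m,sn,i) \<in> set (dls (out k))}"

lemma recv_at:
  assumes Ek: "E k = (q, Recv (m,sn,i,S))" and iS: "i \<in> S" and T: "tm k \<le> Suc (Suc (tm k0))"
    and qN: "q \<in> C - D"
  shows "S \<inter> {..<n} \<subseteq> saved (st (Suc k) q) (m,sn,i) \<and> 2 * card (saved (st (Suc k) q) (m,sn,i)) \<le> n + t"
proof -
  have nodlv: "\<not> (\<exists>m'. (m', sn, i) \<in> dlv (st k q))"
  proof
    assume "\<exists>m'. (m', sn, i) \<in> dlv (st k q)"
    then obtain m' where "(m', sn, i) \<in> dlv (st k q)" by blast
    from inv_dlv[OF this] obtain k' where k': "k' < k" "fst (E k') = q" "(m',sn,i) \<in> set (dls (out k'))" by blast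
    from ev_dls[OF k'(3)] obtain S'' where "snd (E k') = Recv (m',sn,i,S'')" "i \<in> S''" by blast
    then have "E k' = (q, Recv (m',sn,i,S''))" "i \<in> S''" using k'(2) by (cases "E k'", auto)
    from Q[OF this] have "m' = m" by simp
    moreover have "tm k' \<le> tm k" using tm_le k'(1) by simp
    ultimately have "q \<in> D" using k' T qN unfolding D_def by auto
    then show False using qN by simp
  qed
  have r: "recv_step n t q (m,sn,i,S) (st k q) = (st (Suc k) q, out k)"
    using step_at[OF Ek] by (simp add: act_step_def)
  have g: "\<not>((\<exists>m'. (m', sn, i) \<in> dlv (st k q)) \<or> i \<notin> S \<or> n \<le> i)"
    using nodlv iS iN by auto
  note rg = recv_guard[OF g r]
  have "dls (out k) = []"
  proof (rule ccontr)
    assume "dls (out k) \<noteq> []"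
    then obtain y where "y \<in> set (dls (out k))" by (cases "dls (out k)") auto
    then have "(m,sn,i) \<in> set (dls (out k))" using rg by auto
    then have "q \<in> D" using Ek T qN unfolding D_def by (auto intro!: exI[of _ k])
    then show False using qN by simp
  qed
  then show ?thesis using rg by blast
qed

lemma NG:
  assumes qN: "q \<in> C - D" and GC: "G \<subseteq> C"
    and rec: "\<forall>w\<in>G. \<exists>k' S'. E k' = (q, Recv (m,sn,i,S')) \<and> tm k' \<le> Suc (Suc (tm k0)) \<and> w \<in> S' \<and> i \<in> S'"
  shows "card G \<le> (n + t) div 2"
proof (cases "G = {}")
  case True then show ?thesis by simp
next
  case False
  have fG: "finite G" using finite_subset[OF subset_trans[OF GC Cn]] by simp
  from bchoice[OF rec] obtain r where r: "\<forall>w\<in>G. \<exists>S'. E (r w) = (q, Recv (m,sn,i,S')) \<and> tm (r w) \<le> Suc (Suc (tm k0)) \<and> w \<in> S' \<and> i \<in> S'"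
    by blast
  define ks where "ks = Max (r ` G)"
  have ksin: "ks \<in> r ` G" unfolding ks_def using fG False by simp
  have sub: "G \<subseteq> saved (st (Suc ks) q) (m,sn,i)"
  proof
    fix w assume wG: "w \<in> G"
    from r wG obtain S' where S': "E (r w) = (q, Recv (m,sn,i,S'))" "tm (r w) \<le> Suc (Suc (tm k0))" "w \<in> S'" "i \<in> S'" by blast
    have "w < n" using wG GC Cn by blast
    moreover have "S' \<inter> {..<n} \<subseteq> saved (st (Suc (r w)) q) (m,sn,i)" using recv_at[OF S'(1) S'(4) S'(2) qN] by (rule conjunct1)
    ultimately have w1: "w \<in> saved (st (Suc (r w)) q) (m,sn,i)" using S'(3) by blast
    have "r w \<le> ks" unfolding ks_def using Max_ge[OF finite_imageI[OF fG] imageI[OF wG]] .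
    then have "saved (st (Suc (r w)) q) (m,sn,i) \<subseteq> saved (st (Suc ks) q) (m,sn,i)" using saved_mono[of "Suc (r w)" "Suc ks" q] by simp
    then show "w \<in> saved (st (Suc ks) q) (m,sn,i)" using w1 by blast
  qed
  from ksin obtain w0 where w0: "w0 \<in> G" "ks = r w0" by blast
  from r w0(1) obtain S' where S0': "E (r w0) = (q, Recv (m,sn,i,S'))" "tm (r w0) \<le> Suc (Suc (tm k0))" "i \<in> S'" by blast
  then have S': "E ks = (q, Recv (m,sn,i,S'))" "tm ks \<le> Suc (Suc (tm k0))" "i \<in> S'" using w0(2) by simp_all
  have c2: "2 * card (saved (st (Suc ks) q) (m,sn,i)) \<le> n + t" using recv_at[OF S'(1) S'(3) S'(2) qN] by (rule conjunct2)
  have "card G \<le> card (saved (st (Suc ks) q) (m,sn,i))"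
    by (rule card_mono[OF finite_subset[OF saved_bound finite_lessThan] sub])
  then show ?thesis using c2 by linarith
qed

definition "M0 = {p\<in>C. \<not> (\<exists>k'. E k' = (p, Recv b0) \<and> tm k' = tm k0 + 1)}"
definition "W = insert i (C - M0)"

lemma W_props: "W \<subseteq> C" "finite W" "card C - d \<le> card W"
proof -
  show WC: "W \<subseteq> C" unfolding W_def using iC by blast
  have fC: "finite C" using finite_subset[OF Cn] by simp
  then show "finite W" using finite_subset[OF WC] by simp
  have "card M0 \<le> d" unfolding M0_def using miss[of b0 k0] bcs_k0 by simp
  moreover have "card (C - M0) = card C - card M0" by (rule card_Diff_subset) (use fC in \<open>auto simp: M0_def intro: finite_subset\<close>)
  moreover have "card (C - M0) \<le> card W" unfolding W_def using fC by (intro card_mono) auto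
  ultimately show "card C - d \<le> card W" by linarith
qed

lemma main_count: "card (C - D) * (card W - (n+t) div 2) \<le> d * card W"
proof -
  have carriers: "\<forall>w\<in>W. \<exists>kB. snd kB \<in> set (bcs (out (fst kB))) \<and> tm (fst kB) \<le> Suc (tm k0) \<and> (\<exists>S'. snd kB = (m,sn,i,S') \<and> w \<in> S')"
  proof
    fix w assume wW: "w \<in> W"
    show "\<exists>kB. snd kB \<in> set (bcs (out (fst kB))) \<and> tm (fst kB) \<le> Suc (tm k0) \<and> (\<exists>S'. snd kB = (m,sn,i,S') \<and> w \<in> S')"
    proof (cases "w = i")
      case True
      then show ?thesis using bcs_k0 iS0 by (intro exI[of _ "(k0, b0)"]) (simp add: b0_def)
    next
      case False
      then have "w \<in> C" "\<exists>k'. E k' = (w, Recv b0) \<and> tm k' = Suc (tm k0)" using wW unfolding W_def M0_def by auto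
      from carrier[OF this(1) False this(2)] obtain k1 S' where "tm k1 = Suc (tm k0)" "(m,sn,i,S') \<in> set (bcs (out k1))" "w \<in> S'" by blast
      then show ?thesis by (intro exI[of _ "(k1, (m,sn,i,S'))"]) simp
    qed
  qed
  from bchoice[OF carriers] obtain f where f: "\<forall>w\<in>W. snd (f w) \<in> set (bcs (out (fst (f w)))) \<and> tm (fst (f w)) \<le> Suc (tm k0) \<and> (\<exists>S'. snd (f w) = (m,sn,i,S') \<and> w \<in> S')"
    by blast
  define Mw where "Mw w = {p\<in>C. \<not> (\<exists>k'. E k' = (p, Recv (snd (f w))) \<and> tm k' = tm (fst (f w)) + 1)}" for w
  define K where "K = (n+t) div 2"
  define N where "N = C - D"
  have fC: "finite C" using finite_subset[OF Cn] by simp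
  have fW: "finite W" using W_props by simp
  have fN: "finite N" unfolding N_def using fC by simp
  have Mc: "card (Mw w) \<le> d" if "w \<in> W" for w
    unfolding Mw_def using miss[of "snd (f w)" "fst (f w)"] f that by blast
  have Gb: "card {w\<in>W. q \<notin> Mw w} \<le> K" if qN: "q \<in> N" for q
  proof -
    have "q \<in> C - D" using qN N_def by simp
    moreover have "{w\<in>W. q \<notin> Mw w} \<subseteq> C" using W_props by blast
    moreover have "\<forall>w\<in>{w\<in>W. q \<notin> Mw w}. \<exists>k' S'. E k' = (q, Recv (m,sn,i,S')) \<and> tm k' \<le> Suc (Suc (tm k0)) \<and> w \<in> S' \<and> i \<in> S'"
    proof
      fix w assume "w \<in> {w\<in>W. q \<notin> Mw w}"
      then have wW: "w \<in> W" and qM: "q \<notin> Mw w" by auto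
      from f wW obtain S' where S': "snd (f w) = (m,sn,i,S')" "w \<in> S'" "snd (f w) \<in> set (bcs (out (fst (f w))))" "tm (fst (f w)) \<le> Suc (tm k0)" by blast
      have iS': "i \<in> S'" using ev_bcs[of m sn i S' "fst (f w)"] S' by simp
      have "q \<in> C" using qN N_def by simp
      then obtain k' where "E k' = (q, Recv (snd (f w)))" "tm k' = tm (fst (f w)) + 1" using qM unfolding Mw_def by blast
      then show "\<exists>k' S'. E k' = (q, Recv (m,sn,i,S')) \<and> tm k' \<le> Suc (Suc (tm k0)) \<and> w \<in> S' \<and> i \<in> S'"
        using S' iS' by (intro exI[of _ k'] exI[of _ S']) simp
    qed
    ultimately show ?thesis using NG K_def by blast
  qed
  have low: "card W - K \<le> card {w\<in>W. q \<in> Mw w}" if qN: "q \<in> N" for q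
  proof -
    have "{w\<in>W. q \<in> Mw w} = W - {w\<in>W. q \<notin> Mw w}" by blast
    then have "card {w\<in>W. q \<in> Mw w} = card W - card {w\<in>W. q \<notin> Mw w}"
      using card_Diff_subset[of "{w\<in>W. q \<notin> Mw w}" W] fW by simp
    then show ?thesis using Gb[OF qN] by linarith
  qed
  have cnt: "\<And>A P. finite A \<Longrightarrow> card {x\<in>A. P x} = (\<Sum>x\<in>A. if P x then 1 else 0::nat)"
    by (simp add: sum.If_cases Int_def)
  have "card N * (card W - K) = (\<Sum>q\<in>N. card W - K)" by simp
  also have "\<dots> \<le> (\<Sum>q\<in>N. card {w\<in>W. q \<in> Mw w})" by (rule sum_mono) (rule low)
  also have "\<dots> = (\<Sum>q\<in>N. \<Sum>w\<in>W. if q \<in> Mw w then 1 else 0)" by (rule sum.cong[OF refl]) (rule cnt[OF fW])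
  also have "\<dots> = (\<Sum>w\<in>W. \<Sum>q\<in>N. if q \<in> Mw w then 1 else 0)" by (rule sum.swap)
  also have "\<dots> = (\<Sum>w\<in>W. card {q\<in>N. q \<in> Mw w})" by (rule sum.cong[OF refl]) (rule cnt[OF fN, symmetric])
  also have "\<dots> \<le> (\<Sum>w\<in>W. d)"
  proof (rule sum_mono)
    fix w assume "w \<in> W"
    have "card {q\<in>N. q \<in> Mw w} \<le> card (Mw w)"
      by (rule card_mono) (auto simp: Mw_def intro: finite_subset[OF _ fC])
    then show "card {q\<in>N. q \<in> Mw w} \<le> d" using Mc[OF \<open>w \<in> W\<close>] by linarith
  qed
  also have "\<dots> = d * card W" by simp
  finally show ?thesis unfolding N_def K_def .
qed

end

lemma arith_final:
  fixes Nc Wc c d K :: nat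
  assumes "c - d \<le> Wc" "Wc \<le> c" "K < c - d" "Nc * (Wc - K) \<le> d * Wc" "Nc \<le> c"
  shows "int c - int d - \<lfloor>real d * real K / (real c - real d - real K)\<rfloor> \<le> int (c - Nc)"
proof -
  have kd: "K + d < c" "K < Wc" "d \<le> c" "c \<le> Wc + d" using assms by linarith+
  have pos: "real c - real d - real K > 0" using kd by linarith
  have h1: "real Nc * (real Wc - real K) \<le> real d * real Wc"
  proof -
    have "real (Nc * (Wc - K)) \<le> real (d * Wc)" using assms(4) by (simp only: of_nat_le_iff)
    then show ?thesis using kd by (simp add: of_nat_diff)
  qed
  have h2: "(real Nc - real d) * (real c - real d - real K) \<le> real d * real K"
  proof (cases "d \<le> Nc")
    case True
    have "(real Nc - real d) * (real c - real d - real K) \<le> (real Nc - real d) * (real Wc - real K)"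
      by (rule mult_left_mono) (use True kd in auto)
    also have "\<dots> = real Nc * (real Wc - real K) - real d * real Wc + real d * real K" by (simp add: algebra_simps)
    also have "\<dots> \<le> real d * real K" using h1 by linarith
    finally show ?thesis .
  next
    case False
    have "(real Nc - real d) * (real c - real d - real K) \<le> 0"
      by (rule mult_nonpos_nonneg) (use False pos in auto)
    also have "0 \<le> real d * real K" by simp
    finally show ?thesis .
  qed
  have "real Nc - real d \<le> real d * real K / (real c - real d - real K)"
    using h2 pos by (simp add: pos_le_divide_eq)
  then have "int Nc - int d \<le> \<lfloor>real d * real K / (real c - real d - real K)\<rfloor>"
    by (simp add: le_floor_iff)
  then show ?thesis using assms(5) by (simp add: of_nat_diff)
qed

theorem mainTheorem8:
  fixes n t d :: nat and C :: "nat set" and E :: "nat \<Rightarrow> nat \<times> 'm action"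
    and tm :: "nat \<Rightarrow> nat" and k0 i sn :: nat and m :: 'm
  assumes "C \<subseteq> {..<n}" and "n - t \<le> card C" and "d < card C"
    and "3 * t + 2 * d < n"
    and "valid_exec n t d C E tm"
    and "E k0 = (i, MBcast m sn)"
  shows "int (card {p \<in> C. \<exists>k. fst (E k) = p \<and> tm k \<le> tm k0 + 2 \<and>
                              (m, sn, i) \<in> set (dls (outp n t E k))})
         \<ge> int (card C) - int d
            - \<lfloor>real d * real ((n + t) div 2) /
                 (real (card C) - real d - real ((n + t) div 2))\<rfloor>"
proof -
  interpret mb2 n t d C E tm k0 i sn m
    using assms by unfold_locales auto
  have Deq: "{p \<in> C. \<exists>k. fst (E k) = p \<and> tm k \<le> tm k0 + 2 \<and> (m, sn, i) \<in> set (dls (outp n t E k))} = D"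
    unfolding D_def by simp
  have fC: "finite C" using finite_subset[OF assms(1)] by simp
  have DC: "C - (C - D) = D" unfolding D_def by blast
  have cD: "card D = card C - card (C - D)"
    using card_Diff_subset[of "C - D" C] fC DC by (simp add: finite_subset)
  have K: "(n + t) div 2 < card C - d" using assms(2,4) by linarith
  have "int (card C) - int d - \<lfloor>real d * real ((n + t) div 2) / (real (card C) - real d - real ((n + t) div 2))\<rfloor>
        \<le> int (card C - card (C - D))"
    by (rule arith_final[OF W_props(3) card_mono[OF fC W_props(1)] K main_count])
       (use fC in \<open>simp add: card_mono\<close>)
  then show ?thesis unfolding Deq cD by simp
qed

end
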